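(* Consider a balanced mass action chemical reaction network with complex stoichiometric matrix $Z$ and complex-graph incidence matrix $B$, and let $x^*\in\mathbb{R}^m_+$ be a thermodynamic equilibrium. Assume the complex graph is connected. Then for any other thermodynamic equilibrium $x^{**}$ there exists a constant $d^{**}>0$ such that $\mathcal{K}(x^{**})=d^{**}\mathcal{K}(x^* )$ and $\mathrm{Exp}\big(Z^T\mathrm{Ln}(\tfrac{x}{x^{**}})\big)=\tfrac{1}{d^{**}}\mathrm{Exp}\big(Z^T\mathrm{Ln}(\tfrac{x}{x^{*}})\big)$ for all $x\in\mathbb{R}^m_+$. Furthermore, if the complex graph is not connected and has $\ell$ connected components (linkage classes), then for any other thermodynamic equilibrium $x^{**}$ there exist constants $d_p^{**}>0$, $p=1,\dots,\ell$, such that $\mathcal{K}_p(x^{**})=d_p^{**}\mathcal{K}_p(x^* )$ for $p=1,\dots,\ell$.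
   Context: Network: $m$ species with concentrations $x\in\mathbb{R}^m_+$, $c$ complexes, $r$ reactions. $Z$ ($m\times c$) has as $\rho$-th column the species composition of complex $\rho$. The complex graph has the complexes as vertices and, for each reaction $j$, an edge from its substrate complex $\mathcal{S}_j$ to its product complex $\mathcal{P}_j$; $B$ is its $c\times r$ incidence matrix ($-1$ at tail, $+1$ at head). Connectivity is in the undirected sense; the connected components are called linkage classes. Mass action rates: $v_j(x)=k_j^{\mathrm{forw}}\exp(Z_{\mathcal{S}_j}^T\mathrm{Ln}(x))-k_j^{\mathrm{rev}}\exp(Z_{\mathcal{P}_j}^T\mathrm{Ln}(x))$ with $k_j^{\mathrm{forw}},k_j^{\mathrm{rev}}\ge0$ not both zero, and dynamics $\dot x=ZBv(x)$. A thermodynamic equilibrium is $x^*\in\mathbb{R}^m_+$ with $v(x^* )=0$; the network is balanced if one exists. For a thermodynamic equilibrium $x^*$, the balanced reaction constants are $\kappa_j(x^* ):=k_j^{\mathrm{forw}}\exp(Z_{\mathcal{S}_j}^T\mathrm{Ln}(x^* ))=k_j^{\mathrm{rev}}\exp(Z_{\mathcal{P}_j}^T\mathrm{Ln}(x^* ))>0$ and $\mathcal{K}(x^* ):=\mathrm{diag}(\kappa_1(x^* ),\dots,\kappa_r(x^* ))$. When reactions are grouped by linkage class, $\mathcal{K}_p(x^* )$ denotes the diagonal block of $\mathcal{K}(x^* )$ belonging to the reactions of the $p$-th linkage class. $\mathrm{Ln},\mathrm{Exp}$ are componentwise logarithm/exponential and $x/x^*$ is the componentwise quotient. *)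

theory Defs
  imports Main "HOL.Real" Complex_Main
begin

text \<open>Species are indexed by a finite type 's, complexes by a finite type 'c,
reactions by a finite type 'r.  Z s c is the stoichiometric coefficient of
species s in complex c.  Reaction j has substrate complex S j and product
complex P j (edge S j -> P j in the complex graph).\<close>

definition monomial :: "('s::finite \<Rightarrow> 'c \<Rightarrow> nat) \<Rightarrow> 'c \<Rightarrow> ('s \<Rightarrow> real) \<Rightarrow> real" where
  "monomial Z c x = exp (\<Sum>s\<in>UNIV. real (Z s c) * ln (x s))"

definition rate ::
  "('s::finite \<Rightarrow> 'c \<Rightarrow> nat) \<Rightarrow> ('r \<Rightarrow> 'c) \<Rightarrow> ('r \<Rightarrow> 'c) \<Rightarrow> ('r \<Rightarrow> real) \<Rightarrow> ('r \<Rightarrow> real)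
     \<Rightarrow> ('s \<Rightarrow> real) \<Rightarrow> 'r \<Rightarrow> real" where
  "rate Z S P kf kr x j = kf j * monomial Z (S j) x - kr j * monomial Z (P j) x"

definition pos_vec :: "('s \<Rightarrow> real) \<Rightarrow> bool" where
  "pos_vec x \<longleftrightarrow> (\<forall>s. x s > 0)"

definition thermo_eq ::
  "('s::finite \<Rightarrow> 'c \<Rightarrow> nat) \<Rightarrow> ('r \<Rightarrow> 'c) \<Rightarrow> ('r \<Rightarrow> 'c) \<Rightarrow> ('r \<Rightarrow> real) \<Rightarrow> ('r \<Rightarrow> real)
     \<Rightarrow> ('s \<Rightarrow> real) \<Rightarrow> bool" where
  "thermo_eq Z S P kf kr x \<longleftrightarrow> pos_vec x \<and> (\<forall>j. rate Z S P kf kr x j = 0)"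

definition kappa ::
  "('s::finite \<Rightarrow> 'c \<Rightarrow> nat) \<Rightarrow> ('r \<Rightarrow> 'c) \<Rightarrow> ('r \<Rightarrow> real) \<Rightarrow> ('s \<Rightarrow> real) \<Rightarrow> 'r \<Rightarrow> real" where
  "kappa Z S kf x j = kf j * monomial Z (S j) x"

definition cg_edges :: "('r \<Rightarrow> 'c) \<Rightarrow> ('r \<Rightarrow> 'c) \<Rightarrow> ('c \<times> 'c) set" where
  "cg_edges S P = {(S j, P j) | j. True} \<union> {(P j, S j) | j. True}"

definition linked :: "('r \<Rightarrow> 'c) \<Rightarrow> ('r \<Rightarrow> 'c) \<Rightarrow> ('c \<times> 'c) set" where
  "linked S P = (cg_edges S P)\<^sup>*"

definition cg_connected :: "('r \<Rightarrow> 'c) \<Rightarrow> ('r \<Rightarrow> 'c) \<Rightarrow> bool" where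
  "cg_connected S P \<longleftrightarrow> (\<forall>c1 c2. (c1, c2) \<in> linked S P)"

definition linkage_classes :: "('r \<Rightarrow> 'c) \<Rightarrow> ('r \<Rightarrow> 'c) \<Rightarrow> 'c set set" where
  "linkage_classes S P = UNIV // linked S P"

end

theory Submission
  imports Defs
begin

lemma mono_pos: "monomial Z c x > 0" by (simp add: monomial_def)

lemma mono_ratio:
  fixes Z :: "'s::finite \<Rightarrow> 'c \<Rightarrow> nat"
  shows "monomial Z c y = monomial Z c x * exp (\<Sum>s\<in>UNIV. real (Z s c) * (ln (y s) - ln (x s)))"
proof -
  have "(\<Sum>s\<in>UNIV. real (Z s c) * ln (y s)) = (\<Sum>s\<in>UNIV. real (Z s c) * ln (x s)) + (\<Sum>s\<in>UNIV. real (Z s c) * (ln (y s) - ln (x s)))"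
    by (simp add: sum.distrib[symmetric] algebra_simps)
  then show ?thesis by (simp add: monomial_def exp_add)
qed

theorem proposition3:
  fixes Z :: "'s::finite \<Rightarrow> 'c::finite \<Rightarrow> nat"
    and S P :: "'r::finite \<Rightarrow> 'c"
    and kf kr :: "'r \<Rightarrow> real"
    and xs :: "'s \<Rightarrow> real"
  assumes nonneg: "\<forall>j. kf j \<ge> 0 \<and> kr j \<ge> 0"
    and notboth: "\<forall>j. kf j \<noteq> 0 \<or> kr j \<noteq> 0"
    and eq1: "thermo_eq Z S P kf kr xs"
  shows
    "(cg_connected S P \<longrightarrow>
       (\<forall>xss. thermo_eq Z S P kf kr xss \<longrightarrow>
          (\<exists>d>0. (\<forall>j. kappa Z S kf xss j = d * kappa Z S kf xs j) \<and>
                 (\<forall>x. pos_vec x \<longrightarrow> (\<forall>c.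
                    exp (\<Sum>s\<in>UNIV. real (Z s c) * ln (x s / xss s)) =
                    (1 / d) * exp (\<Sum>s\<in>UNIV. real (Z s c) * ln (x s / xs s)))))))
     \<and>
     (\<not> cg_connected S P \<longrightarrow>
       (\<forall>xss. thermo_eq Z S P kf kr xss \<longrightarrow>
          (\<exists>d :: 'c set \<Rightarrow> real. \<forall>L\<in>linkage_classes S P. d L > 0 \<and>
              (\<forall>j. S j \<in> L \<longrightarrow> kappa Z S kf xss j = d L * kappa Z S kf xs j))))"
proof -
  have kpos: "\<And>x j. thermo_eq Z S P kf kr x \<Longrightarrow> kappa Z S kf x j > 0"
  proof -
    fix x j assume t: "thermo_eq Z S P kf kr x"
    hence r0: "kf j * monomial Z (S j) x = kr j * monomial Z (P j) x"
      by (simp add: thermo_eq_def rate_def)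
    have m1: "monomial Z (S j) x > 0" "monomial Z (P j) x > 0" by (simp_all add: mono_pos)
    show "kappa Z S kf x j > 0"
    proof (cases "kf j = 0")
      case True
      then have "kr j \<noteq> 0" using notboth by auto
      with r0 True m1 show ?thesis by simp
    next
      case False
      then have "kf j > 0" using nonneg by (metis order_le_less)
      then show ?thesis using m1 by (simp add: kappa_def)
    qed
  qed
  show ?thesis
  proof (intro conjI impI allI)
    fix xss assume t2: "thermo_eq Z S P kf kr xss"
    define r where "r c = exp (\<Sum>s\<in>UNIV. real (Z s c) * (ln (xss s) - ln (xs s)))" for c
    have kap: "kappa Z S kf xss j = r (S j) * kappa Z S kf xs j" for j
      using mono_ratio[of Z "S j" xss xs] by (simp add: kappa_def r_def)
    have edge: "r (S j) = r (P j)" for j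
    proof -
      have a: "kf j * monomial Z (S j) xs = kr j * monomial Z (P j) xs"
        using eq1 by (simp add: thermo_eq_def rate_def)
      have b: "kf j * monomial Z (S j) xss = kr j * monomial Z (P j) xss"
        using t2 by (simp add: thermo_eq_def rate_def)
      have "kappa Z S kf xss j = r (P j) * kappa Z S kf xs j"
        using b a mono_ratio[of Z "P j" xss xs] by (simp add: kappa_def r_def)
      with kap[of j] kpos[OF eq1, of j] show ?thesis by simp
    qed
    have lk: "(a, b) \<in> linked S P \<Longrightarrow> r a = r b" for a b
      unfolding linked_def
    proof (induction rule: rtrancl_induct)
      case base then show ?case by simp
    next
      case (step y z)
      then show ?case using edge unfolding cg_edges_def by auto
    qed
    {
      assume con: "cg_connected S P"
      define d where "d = r undefined"
      have rc: "r c = d" for c using lk con unfolding cg_connected_def d_def by metis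
      show "\<exists>d>0. (\<forall>j. kappa Z S kf xss j = d * kappa Z S kf xs j) \<and>
                 (\<forall>x. pos_vec x \<longrightarrow> (\<forall>c.
                    exp (\<Sum>s\<in>UNIV. real (Z s c) * ln (x s / xss s)) =
                    (1 / d) * exp (\<Sum>s\<in>UNIV. real (Z s c) * ln (x s / xs s))))"
      proof (intro exI conjI allI impI)
        show "d > 0" using rc[of undefined] by (simp add: r_def d_def)
        show "kappa Z S kf xss j = d * kappa Z S kf xs j" for j using kap rc by simp
        fix x :: "'s \<Rightarrow> real" and c assume px: "pos_vec x"
        have p1: "xs s > 0" "xss s > 0" "x s > 0" for s :: 's
          using eq1 t2 px by (auto simp: thermo_eq_def pos_vec_def)
        have "(\<Sum>s\<in>UNIV. real (Z s c) * ln (x s / xss s)) =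
              (\<Sum>s\<in>UNIV. real (Z s c) * ln (x s / xs s)) - (\<Sum>s\<in>UNIV. real (Z s c) * (ln (xss s) - ln (xs s)))"
          using p1 by (simp add: sum_subtractf[symmetric] ln_div less_imp_neq[symmetric] algebra_simps)
        then show "exp (\<Sum>s\<in>UNIV. real (Z s c) * ln (x s / xss s)) =
                    (1 / d) * exp (\<Sum>s\<in>UNIV. real (Z s c) * ln (x s / xs s))"
          using rc[of c] by (simp add: r_def exp_diff)
      qed
    }
    {
      show "\<exists>d :: 'c set \<Rightarrow> real. \<forall>L\<in>linkage_classes S P. d L > 0 \<and>
              (\<forall>j. S j \<in> L \<longrightarrow> kappa Z S kf xss j = d L * kappa Z S kf xs j)"
      proof (intro exI ballI conjI allI impI)
        fix L assume L: "L \<in> linkage_classes S P"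
        show "r (SOME c. c \<in> L) > 0" by (simp add: r_def)
        fix j assume sj: "S j \<in> L"
        then have ex: "(SOME c. c \<in> L) \<in> L" by (metis someI)
        obtain a where La: "L = linked S P `` {a}" using L unfolding linkage_classes_def
          by (auto elim: quotientE)
        have "r (SOME c. c \<in> L) = r (S j)" using ex sj La lk by (metis Image_singleton_iff)
        then show "kappa Z S kf xss j = r (SOME c. c \<in> L) * kappa Z S kf xs j" using kap by simp
      qed
    }
  qed
qed

end
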